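(* Let $G=(V,E,T,c)$ be a $k$-terminal network. For every $S\subset T$ with $S\neq\emptyset,T$ there exist $S_1,\dots,S_m\in\mathcal{T}_e(G)$ ($m\ge1$) such that the sets $E_{S_1},\dots,E_{S_m}$ are pairwise disjoint and $E_S=E_{S_1}\cup\dots\cup E_{S_m}$.
   Context: A $k$-terminal network $G=(V,E,T,c)$ is a finite connected undirected graph $(V,E)$ with edge weights (capacities) $c:E\to\mathbb{R}_{>0}$ and a set $T\subseteq V$ of $|T|=k$ terminals. For $F\subseteq E$ let $c(F)=\sum_{e\in F}c(e)$; for $W\subseteq V$ let $\delta(W)$ be the set of edges with exactly one endpoint in $W$. For $S\subset T$ with $S\neq\emptyset,T$, write $\bar S=T\setminus S$; a cut $(W,V\setminus W)$ is $S$-separating if $W\cap T\in\{S,\bar S\}$, and $\mathrm{mincut}_G(S)$ is the minimum of $c(\delta(W))$ over all $S$-separating cuts. It is assumed (e.g. by a generic perturbation of the weights) that the minimizing cutset is unique; it is denoted $E_S$ (so $E_S=E_{\bar S}$). For $F\subseteq E$, $CC(F)$ denotes the set of vertex sets of connected components of $(V,E\setminus F)$. The cutset $E_S$ is called elementary if $|CC(E_S)|=2$, and $\mathcal{T}_e(G)=\{S\subset T:\ S\neq\emptyset,T,\ |CC(E_S)|=2\}$. *)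

theory Defs
  imports Complex_Main
begin

text \<open>Undirected (simple) graphs: edges are 2-element vertex sets.
  Edge weights c :: 'v set => real.\<close>

definition cut_edges :: "'v set set \<Rightarrow> 'v set \<Rightarrow> 'v set set" where
  "cut_edges E W = {e \<in> E. card (e \<inter> W) = 1}"

definition cap :: "('v set \<Rightarrow> real) \<Rightarrow> 'v set set \<Rightarrow> real" where
  "cap c F = (\<Sum>e\<in>F. c e)"

definition adj :: "'v set set \<Rightarrow> 'v set set \<Rightarrow> ('v \<times> 'v) set" where
  "adj E F = {(u, v). {u, v} \<in> E - F \<and> u \<noteq> v}"

definition reach :: "'v set \<Rightarrow> 'v set set \<Rightarrow> 'v set set \<Rightarrow> 'v \<Rightarrow> 'v \<Rightarrow> bool" where
  "reach V E F u v \<longleftrightarrow> u \<in> V \<and> v \<in> V \<and> (u, v) \<in> (adj E F)\<^sup>*"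

definition CC :: "'v set \<Rightarrow> 'v set set \<Rightarrow> 'v set set \<Rightarrow> 'v set set" where
  "CC V E F = {{v \<in> V. reach V E F u v} | u. u \<in> V}"

definition terminal_network ::
  "'v set \<Rightarrow> 'v set set \<Rightarrow> 'v set \<Rightarrow> ('v set \<Rightarrow> real) \<Rightarrow> bool" where
  "terminal_network V E T c \<longleftrightarrow>
     finite V \<and> (\<forall>e\<in>E. e \<subseteq> V \<and> card e = 2) \<and>
     (\<forall>u\<in>V. \<forall>v\<in>V. reach V E {} u v) \<and>
     (\<forall>e\<in>E. c e > 0) \<and> T \<subseteq> V"

definition proper_sub :: "'v set \<Rightarrow> 'v set \<Rightarrow> bool" where
  "proper_sub T S \<longleftrightarrow> S \<subseteq> T \<and> S \<noteq> {} \<and> S \<noteq> T"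

definition separating :: "'v set \<Rightarrow> 'v set \<Rightarrow> 'v set \<Rightarrow> 'v set \<Rightarrow> bool" where
  "separating V T S W \<longleftrightarrow> W \<subseteq> V \<and> (W \<inter> T = S \<or> W \<inter> T = T - S)"

definition mincut ::
  "'v set \<Rightarrow> 'v set set \<Rightarrow> 'v set \<Rightarrow> ('v set \<Rightarrow> real) \<Rightarrow> 'v set \<Rightarrow> real" where
  "mincut V E T c S = Min ((\<lambda>W. cap c (cut_edges E W)) ` {W. separating V T S W})"

definition min_sep_cut ::
  "'v set \<Rightarrow> 'v set set \<Rightarrow> 'v set \<Rightarrow> ('v set \<Rightarrow> real) \<Rightarrow> 'v set \<Rightarrow> 'v set \<Rightarrow> bool" where
  "min_sep_cut V E T c S W \<longleftrightarrow> separating V T S W \<and>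
     cap c (cut_edges E W) = mincut V E T c S"

definition unique_mincuts ::
  "'v set \<Rightarrow> 'v set set \<Rightarrow> 'v set \<Rightarrow> ('v set \<Rightarrow> real) \<Rightarrow> bool" where
  "unique_mincuts V E T c \<longleftrightarrow> (\<forall>S. proper_sub T S \<longrightarrow>
     (\<forall>W1 W2. min_sep_cut V E T c S W1 \<and> min_sep_cut V E T c S W2 \<longrightarrow>
        cut_edges E W1 = cut_edges E W2))"

definition ES ::
  "'v set \<Rightarrow> 'v set set \<Rightarrow> 'v set \<Rightarrow> ('v set \<Rightarrow> real) \<Rightarrow> 'v set \<Rightarrow> 'v set set" where
  "ES V E T c S = (THE F. \<exists>W. min_sep_cut V E T c S W \<and> F = cut_edges E W)"

text \<open>\<T>_e(G): the sets S whose minimum cutset is elementary.\<close>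
definition Te ::
  "'v set \<Rightarrow> 'v set set \<Rightarrow> 'v set \<Rightarrow> ('v set \<Rightarrow> real) \<Rightarrow> 'v set set" where
  "Te V E T c = {S. proper_sub T S \<and> card (CC V E (ES V E T c S)) = 2}"

end

theory Submission
  imports Defs
begin

lemma edge_form: "card e = 2 \<Longrightarrow> \<exists>p q. e = {p,q} \<and> p \<noteq> q"
  by (simp add: card_2_iff)

lemma cut_iff: "p \<noteq> q \<Longrightarrow> {p,q} \<in> cut_edges E W \<longleftrightarrow> {p,q} \<in> E \<and> (p \<in> W \<longleftrightarrow> q \<notin> W)"
  unfolding cut_edges_def by (cases "p \<in> W"; cases "q \<in> W") auto

lemma cross:
  assumes "(u,v) \<in> (adj E (cut_edges E W))\<^sup>*"
  shows "u \<in> W \<longleftrightarrow> v \<in> W"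
  using assms
proof (induction rule: rtrancl_induct)
  case base then show ?case by simp
next
  case (step y z)
  then have "{y,z} \<in> E" "{y,z} \<notin> cut_edges E W" "y \<noteq> z" by (auto simp: adj_def)
  then have "y \<in> W \<longleftrightarrow> z \<in> W" using cut_iff[of y z E W] by auto
  with step show ?case by simp
qed

lemma adj_sym: "(u,v) \<in> adj E F \<Longrightarrow> (v,u) \<in> adj E F"
  by (auto simp: adj_def insert_commute)

lemma adj_rtrancl_sym: "(u,v) \<in> (adj E F)\<^sup>* \<Longrightarrow> (v,u) \<in> (adj E F)\<^sup>*"
proof (induction rule: rtrancl_induct)
  case base then show ?case by simp
next
  case (step y z)
  then show ?case using adj_sym by (meson converse_rtrancl_into_rtrancl)
qed

definition compo :: "'v set \<Rightarrow> 'v set set \<Rightarrow> 'v set set \<Rightarrow> 'v \<Rightarrow> 'v set" where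
  "compo V E F u = {v \<in> V. reach V E F u v}"

lemma compo_eq:
  assumes "v \<in> compo V E F u"
  shows "compo V E F v = compo V E F u"
  using assms unfolding compo_def reach_def
  by (auto intro: rtrancl_trans dest: adj_rtrancl_sym)

lemma compo_cut:
  assumes edges: "\<forall>e\<in>E. e \<subseteq> V \<and> card e = 2"
  shows "cut_edges E (compo V E F u) \<subseteq> F"
proof
  fix e assume e: "e \<in> cut_edges E (compo V E F u)"
  then have eE: "e \<in> E" by (simp add: cut_edges_def)
  then obtain p q where pq: "e = {p,q}" "p \<noteq> q" using edges edge_form by blast
  have pV: "p \<in> V" "q \<in> V" using edges eE pq by auto
  show "e \<in> F"
  proof (rule ccontr)
    assume nF: "e \<notin> F"
    then have a1: "(p,q) \<in> adj E F" "(q,p) \<in> adj E F" using eE pq by (auto simp: adj_def insert_commute)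
    have "p \<in> compo V E F u \<longleftrightarrow> q \<in> compo V E F u"
      using a1 pV unfolding compo_def reach_def by (auto intro: rtrancl_into_rtrancl)
    moreover have "p \<in> compo V E F u \<longleftrightarrow> q \<notin> compo V E F u"
      using e pq cut_iff[of p q E "compo V E F u"] by auto
    ultimately show False by blast
  qed
qed

lemma cut_nonempty:
  assumes conn: "\<forall>u\<in>V. \<forall>v\<in>V. reach V E {} u v"
    and "a \<in> V" "b \<in> V" "a \<in> X" "b \<notin> X"
  shows "cut_edges E X \<noteq> {}"
proof
  assume h: "cut_edges E X = {}"
  have "(a,b) \<in> (adj E {})\<^sup>*" using conn assms by (auto simp: reach_def)
  then have "(a,b) \<in> (adj E (cut_edges E X))\<^sup>*" using h by simp
  then have "a \<in> X \<longleftrightarrow> b \<in> X" by (rule cross)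
  with assms show False by simp
qed

lemma cut_compl:
  assumes edges: "\<forall>e\<in>E. e \<subseteq> V \<and> card e = 2"
  shows "cut_edges E (V - X) = cut_edges E X"
proof -
  have "e \<in> cut_edges E (V - X) \<longleftrightarrow> e \<in> cut_edges E X" for e
  proof (cases "e \<in> E")
    case True
    then obtain p q where pq: "e = {p,q}" "p \<noteq> q" using edges edge_form by blast
    moreover have "p \<in> V" "q \<in> V" using edges True pq by auto
    ultimately show ?thesis using cut_iff[of p q E X] cut_iff[of p q E "V - X"] True by auto
  next
    case False then show ?thesis by (simp add: cut_edges_def)
  qed
  then show ?thesis by blast
qed

lemma cut_symdiff:
  assumes edges: "\<forall>e\<in>E. e \<subseteq> V \<and> card e = 2"
  shows "cut_edges E ((A - B) \<union> (B - A)) =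
    (cut_edges E A - cut_edges E B) \<union> (cut_edges E B - cut_edges E A)"
proof -
  have "e \<in> cut_edges E ((A - B) \<union> (B - A)) \<longleftrightarrow>
     e \<in> (cut_edges E A - cut_edges E B) \<union> (cut_edges E B - cut_edges E A)" for e
  proof (cases "e \<in> E")
    case True
    then obtain p q where pq: "e = {p,q}" "p \<noteq> q" using edges edge_form by blast
    then show ?thesis using cut_iff[of p q E A] cut_iff[of p q E B]
        cut_iff[of p q E "(A - B) \<union> (B - A)"] True by auto
  next
    case False then show ?thesis by (simp add: cut_edges_def)
  qed
  then show ?thesis by blast
qed


lemma decomp:
  assumes edges: "\<forall>e\<in>E. e \<subseteq> V \<and> card e = 2"
    and conn: "\<forall>u\<in>V. \<forall>v\<in>V. reach V E {} u v"
    and finE: "finite E"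
  shows "W \<subseteq> V \<Longrightarrow> cut_edges E W \<noteq> {} \<Longrightarrow> \<exists>BB. \<Union>BB = cut_edges E W \<and>
     (\<forall>B\<in>BB. \<exists>X. X \<subseteq> V \<and> B = cut_edges E X \<and> B \<noteq> {} \<and> card (CC V E B) = 2) \<and>
     (\<forall>B1\<in>BB. \<forall>B2\<in>BB. B1 \<noteq> B2 \<longrightarrow> B1 \<inter> B2 = {})"
proof (induction "card (cut_edges E W)" arbitrary: W rule: less_induct)
  case less
  define F where "F = cut_edges E W"
  obtain e where e: "e \<in> F" using less.prems F_def by blast
  then have eE: "e \<in> E" by (simp add: F_def cut_edges_def)
  then obtain p q where pq: "e = {p,q}" "p \<noteq> q" using edges edge_form by blast
  have pqV: "p \<in> V" "q \<in> V" using edges eE pq by auto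
  have side: "p \<in> W \<longleftrightarrow> q \<notin> W" using e pq cut_iff[of p q E W] by (simp add: F_def)
  show ?case
  proof (cases "\<exists>u\<in>V. cut_edges E (compo V E F u) \<noteq> F")
    case True
    then obtain u where u: "u \<in> V" "cut_edges E (compo V E F u) \<noteq> F" by blast
    define C where "C = compo V E F u"
    have CV: "C \<subseteq> V" by (auto simp: C_def compo_def)
    have CF: "cut_edges E C \<subseteq> F" unfolding C_def by (rule compo_cut[OF edges])
    have uC: "u \<in> C" using u by (simp add: C_def compo_def reach_def)
    have "\<not> (p \<in> C \<and> q \<in> C)"
    proof
      assume "p \<in> C \<and> q \<in> C"
      then have "(u,p) \<in> (adj E F)\<^sup>*" "(u,q) \<in> (adj E F)\<^sup>*" by (auto simp: C_def compo_def reach_def)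
      then have "u \<in> W \<longleftrightarrow> p \<in> W" "u \<in> W \<longleftrightarrow> q \<in> W" unfolding F_def
        using cross[of u p E W] cross[of u q E W] by auto
      with side show False by blast
    qed
    then obtain b where b: "b \<in> V" "b \<notin> C" using pqV by blast
    have C_ne: "cut_edges E C \<noteq> {}" using cut_nonempty[OF conn u(1) b(1) uC b(2)] .
    define D where "D = (W - C) \<union> (C - W)"
    have DV: "D \<subseteq> V" using less.prems CV by (auto simp: D_def)
    have cutD: "cut_edges E D = F - cut_edges E C" using cut_symdiff[OF edges, of W C] CF
      by (auto simp: D_def F_def)
    have D_ne: "cut_edges E D \<noteq> {}" using cutD CF u(2) by (auto simp: C_def)
    have finF: "finite F" using finE by (simp add: F_def cut_edges_def)
    have ps1: "cut_edges E C \<subset> F" using CF u(2) unfolding C_def by (simp add: psubset_eq)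
    have lt1: "card (cut_edges E C) < card (cut_edges E W)"
      using psubset_card_mono[OF finF ps1] by (simp add: F_def)
    have ps2: "F - cut_edges E C \<subset> F" using CF C_ne by blast
    have lt2: "card (cut_edges E D) < card (cut_edges E W)"
      using psubset_card_mono[OF finF ps2] cutD by (simp add: F_def)
    obtain BB1 where BB1: "\<Union>BB1 = cut_edges E C"
      "\<forall>B\<in>BB1. \<exists>X. X \<subseteq> V \<and> B = cut_edges E X \<and> B \<noteq> {} \<and> card (CC V E B) = 2"
      "\<forall>B1\<in>BB1. \<forall>B2\<in>BB1. B1 \<noteq> B2 \<longrightarrow> B1 \<inter> B2 = {}"
      using less.hyps[OF lt1 CV C_ne] by meson
    obtain BB2 where BB2: "\<Union>BB2 = cut_edges E D"
      "\<forall>B\<in>BB2. \<exists>X. X \<subseteq> V \<and> B = cut_edges E X \<and> B \<noteq> {} \<and> card (CC V E B) = 2"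
      "\<forall>B1\<in>BB2. \<forall>B2\<in>BB2. B1 \<noteq> B2 \<longrightarrow> B1 \<inter> B2 = {}"
      using less.hyps[OF lt2 DV D_ne] by meson
    have s1: "\<forall>B\<in>BB1. B \<subseteq> cut_edges E C" using BB1(1) by blast
    have s2: "\<forall>B\<in>BB2. B \<subseteq> F - cut_edges E C" using BB2(1) cutD by blast
    show ?thesis
    proof (intro exI[of _ "BB1 \<union> BB2"] conjI)
      show "\<Union>(BB1 \<union> BB2) = cut_edges E W" using BB1(1) BB2(1) cutD CF F_def by auto
      show "\<forall>B\<in>BB1 \<union> BB2. \<exists>X. X \<subseteq> V \<and> B = cut_edges E X \<and> B \<noteq> {} \<and> card (CC V E B) = 2"
        unfolding ball_Un using BB1(2) BB2(2) by (intro conjI)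
      show "\<forall>B1\<in>BB1 \<union> BB2. \<forall>B2\<in>BB1 \<union> BB2. B1 \<noteq> B2 \<longrightarrow> B1 \<inter> B2 = {}"
      proof (intro ballI impI)
        fix B1 B2 assume h: "B1 \<in> BB1 \<union> BB2" "B2 \<in> BB1 \<union> BB2" "B1 \<noteq> B2"
        show "B1 \<inter> B2 = {}"
        proof (cases "B1 \<in> BB1")
          case True
          then show ?thesis
          proof (cases "B2 \<in> BB1")
            case True then show ?thesis using \<open>B1 \<in> BB1\<close> h(3) BB1(3) by blast
          next
            case False then have "B2 \<in> BB2" using h(2) by blast
            then show ?thesis using \<open>B1 \<in> BB1\<close> s1 s2 by blast
          qed
        next
          case False then have b1: "B1 \<in> BB2" using h(1) by blast
          show ?thesis
          proof (cases "B2 \<in> BB1")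
            case True then show ?thesis using b1 s1 s2 by blast
          next
            case False then have "B2 \<in> BB2" using h(2) by blast
            then show ?thesis using b1 h(3) BB2(3) by blast
          qed
        qed
      qed
    qed
  next
    case False
    then have all: "\<And>u. u \<in> V \<Longrightarrow> cut_edges E (compo V E F u) = F" by blast
    define A where "A = compo V E F p"
    define B where "B = compo V E F q"
    have pA: "p \<in> A" using pqV by (simp add: A_def compo_def reach_def)
    have qB: "q \<in> B" using pqV by (simp add: B_def compo_def reach_def)
    have qA: "q \<notin> A"
    proof
      assume "q \<in> A"
      then have "(p,q) \<in> (adj E F)\<^sup>*" by (simp add: A_def compo_def reach_def)
      then have "p \<in> W \<longleftrightarrow> q \<in> W" unfolding F_def by (rule cross)
      with side show False by blast
    qed
    have CCeq: "CC V E F = {compo V E F u | u. u \<in> V}" by (simp add: CC_def compo_def)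
    have "CC V E F = {A, B}"
    proof
      show "CC V E F \<subseteq> {A, B}"
      proof
        fix X assume "X \<in> CC V E F"
        then obtain u where u: "u \<in> V" "X = compo V E F u" using CCeq by blast
        have "{p,q} \<in> cut_edges E X" using all[OF u(1)] u(2) e pq by simp
        then have "p \<in> X \<longleftrightarrow> q \<notin> X" using cut_iff[of p q E X] pq by simp
        then show "X \<in> {A, B}" using compo_eq[of p V E F u] compo_eq[of q V E F u] u
          by (auto simp: A_def B_def)
      qed
      show "{A, B} \<subseteq> CC V E F" using CCeq pqV A_def B_def by blast
    qed
    moreover have "A \<noteq> B" using qA qB by blast
    ultimately have "card (CC V E F) = 2" by simp
    then show ?thesis using less.prems F_def
      by (intro exI[of _ "{F}"]) auto
  qed
qed


lemma sep_finite: "finite V \<Longrightarrow> finite {W. separating V T S W}"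
  by (rule finite_subset[of _ "Pow V"]) (auto simp: separating_def)

lemma mincut_le: "finite V \<Longrightarrow> separating V T S W \<Longrightarrow> mincut V E T c S \<le> cap c (cut_edges E W)"
  unfolding mincut_def by (rule Min_le) (auto intro: finite_imageI sep_finite)

lemma mincut_ex:
  assumes "finite V" "separating V T S W0"
  shows "\<exists>W. min_sep_cut V E T c S W"
proof -
  let ?A = "(\<lambda>W. cap c (cut_edges E W)) ` {W. separating V T S W}"
  have "Min ?A \<in> ?A" using assms by (intro Min_in) (auto intro: sep_finite)
  then obtain W where "separating V T S W" "cap c (cut_edges E W) = Min ?A" by auto
  then show ?thesis unfolding min_sep_cut_def mincut_def by blast
qed

lemma ES_eq:
  assumes "unique_mincuts V E T c" "proper_sub T S" "min_sep_cut V E T c S W"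
  shows "ES V E T c S = cut_edges E W"
  unfolding ES_def
proof (rule the_equality)
  show "\<exists>W'. min_sep_cut V E T c S W' \<and> cut_edges E W = cut_edges E W'" using assms(3) by blast
next
  fix F assume "\<exists>W'. min_sep_cut V E T c S W' \<and> F = cut_edges E W'"
  then obtain W' where "min_sep_cut V E T c S W'" "F = cut_edges E W'" by blast
  then show "F = cut_edges E W" using assms unfolding unique_mincuts_def by blast
qed

theorem theorem2p5:
  fixes V :: "'v set" and E :: "'v set set" and T :: "'v set" and c :: "'v set \<Rightarrow> real"
  assumes "terminal_network V E T c"
    and "unique_mincuts V E T c"
    and "proper_sub T S"
  shows "\<exists>Ss :: 'v set list. Ss \<noteq> [] \<and> set Ss \<subseteq> Te V E T c \<and>
           (\<forall>i < length Ss. \<forall>j < length Ss. i \<noteq> j \<longrightarrow>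
              ES V E T c (Ss ! i) \<inter> ES V E T c (Ss ! j) = {}) \<and>
           ES V E T c S = (\<Union>i < length Ss. ES V E T c (Ss ! i))"
proof -
  from assms(1) have finV: "finite V" and edges: "\<forall>e\<in>E. e \<subseteq> V \<and> card e = 2"
    and conn: "\<forall>u\<in>V. \<forall>v\<in>V. reach V E {} u v" and cpos: "\<forall>e\<in>E. c e > 0" and TV: "T \<subseteq> V"
    unfolding terminal_network_def by auto
  have finE: "finite E" using finV edges by (intro finite_subset[of E "Pow V"]) auto
  have capdiff: "cap c (A - B) = cap c A - cap c B" if "A \<subseteq> E" "B \<subseteq> A" for A B
    unfolding cap_def using that finE by (intro sum_diff) (auto intro: finite_subset)
  have cappos: "cap c B > 0" if "B \<subseteq> E" "B \<noteq> {}" for B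
    unfolding cap_def using that finE cpos by (intro sum_pos) (auto intro: finite_subset)
  have capun: "cap c (A \<union> B) \<le> cap c A + cap c B" if "A \<subseteq> E" "B \<subseteq> E" for A B
  proof -
    have fA: "finite A" "finite B" using that finE by (auto intro: finite_subset)
    have "sum c (A \<inter> B) \<ge> 0" using that cpos by (intro sum_nonneg) (auto simp: less_imp_le)
    then show ?thesis unfolding cap_def using sum_Un[OF fA, of c] by linarith
  qed
  have capmono: "cap c A \<le> cap c B" if "A \<subseteq> B" "B \<subseteq> E" for A B
    unfolding cap_def using that finE cpos
    by (intro sum_mono2) (auto intro: finite_subset less_imp_le)
  have cutE: "cut_edges E X \<subseteq> E" for X by (auto simp: cut_edges_def)

  have sepS: "separating V T S S" using assms(3) TV by (auto simp: separating_def proper_sub_def)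
  obtain W0 where W0: "min_sep_cut V E T c S W0" using mincut_ex[OF finV sepS] by blast
  define F0 where "F0 = cut_edges E W0"
  have ES0: "ES V E T c S = F0" using ES_eq[OF assms(2,3) W0] F0_def by simp
  have W0V: "W0 \<subseteq> V" and W0T: "W0 \<inter> T = S \<or> W0 \<inter> T = T - S"
    using W0 by (auto simp: min_sep_cut_def separating_def)
  have capW0: "cap c F0 = mincut V E T c S" using W0 F0_def by (simp add: min_sep_cut_def)
  have F0ne: "F0 \<noteq> {}"
  proof -
    obtain a b where ab: "a \<in> S" "b \<in> T" "b \<notin> S" using assms(3) by (auto simp: proper_sub_def)
    have aT: "a \<in> T" using ab assms(3) by (auto simp: proper_sub_def)
    show ?thesis
    proof (cases "W0 \<inter> T = S")
      case True
      then show ?thesis unfolding F0_def using ab aT TV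
        by (intro cut_nonempty[OF conn, of a b]) auto
    next
      case False
      then have "W0 \<inter> T = T - S" using W0T by blast
      then show ?thesis unfolding F0_def using ab aT TV
        by (intro cut_nonempty[OF conn, of b a]) auto
    qed
  qed
  have min0: "cap c F0 \<le> cap c (cut_edges E Z)" if "separating V T S Z" for Z
    using capW0 mincut_le[OF finV that] by simp
  have noT: "cut_edges E Y = {}" if Y: "Y \<subseteq> V" "Y \<inter> T = {}" "cut_edges E Y \<subseteq> F0" for Y
  proof (rule ccontr)
    assume ne: "cut_edges E Y \<noteq> {}"
    define Z where "Z = (W0 - Y) \<union> (Y - W0)"
    have "Z \<inter> T = W0 \<inter> T" using Y(2) by (auto simp: Z_def)
    then have "separating V T S Z" using W0T W0V Y(1) by (auto simp: separating_def Z_def)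
    then have "cap c F0 \<le> cap c (cut_edges E Z)" by (rule min0)
    moreover have "cut_edges E Z = F0 - cut_edges E Y"
      using cut_symdiff[OF edges, of W0 Y] Y(3) by (auto simp: Z_def F0_def)
    moreover have "cap c (F0 - cut_edges E Y) = cap c F0 - cap c (cut_edges E Y)"
      using capdiff Y(3) F0_def cutE by blast
    moreover have "cap c (cut_edges E Y) > 0" using cappos ne cutE by blast
    ultimately show False by simp
  qed
  obtain BB where BB: "\<Union>BB = F0"
      "\<forall>B\<in>BB. \<exists>X. X \<subseteq> V \<and> B = cut_edges E X \<and> B \<noteq> {} \<and> card (CC V E B) = 2"
      "\<forall>B1\<in>BB. \<forall>B2\<in>BB. B1 \<noteq> B2 \<longrightarrow> B1 \<inter> B2 = {}"
    using decomp[OF edges conn finE W0V F0ne[unfolded F0_def]] unfolding F0_def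
    by meson
  have key: "\<exists>S'. S' \<in> Te V E T c \<and> ES V E T c S' = B" if BBB: "B \<in> BB" for B
  proof -
    obtain X where X: "X \<subseteq> V" "B = cut_edges E X" "B \<noteq> {}" "card (CC V E B) = 2"
      using bspec[OF BB(2) BBB] by auto
    have BF0: "B \<subseteq> F0" using BB(1) BBB by blast
    define S' where "S' = X \<inter> T"
    have ne1: "S' \<noteq> {}"
    proof
      assume "S' = {}"
      then have "X \<inter> T = {}" by (simp add: S'_def)
      then have "cut_edges E X = {}" using noT[OF X(1)] BF0 X(2) by simp
      then show False using X(2,3) by simp
    qed
    have ne2: "S' \<noteq> T"
    proof
      assume "S' = T"
      then have "(V - X) \<inter> T = {}" using S'_def by blast
      moreover have "cut_edges E (V - X) = B" using cut_compl[OF edges] X(2) by simp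
      ultimately have "cut_edges E (V - X) = {}" using noT[of "V - X"] BF0 by simp
      then show False using X(3) \<open>cut_edges E (V - X) = B\<close> by simp
    qed
    have prS: "proper_sub T S'" using ne1 ne2 S'_def by (auto simp: proper_sub_def)
    have sepX: "separating V T S' X" using X(1) S'_def by (simp add: separating_def)
    obtain Y where Y: "min_sep_cut V E T c S' Y" using mincut_ex[OF finV sepX] by blast
    obtain Y' where Y': "Y' \<subseteq> V" "Y' \<inter> T = S'" "cut_edges E Y' = cut_edges E Y"
    proof (cases "Y \<inter> T = S'")
      case True
      then show ?thesis using that Y by (auto simp: min_sep_cut_def separating_def)
    next
      case False
      then have "Y \<inter> T = T - S'" using Y by (auto simp: min_sep_cut_def separating_def)
      then have "(V - Y) \<inter> T = S'" using TV S'_def by auto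
      then show ?thesis by (intro that[of "V - Y"]) (auto simp: cut_compl[OF edges])
    qed
    define D where "D = (W0 - X) \<union> (X - W0)"
    have cutD: "cut_edges E D = F0 - B"
      using cut_symdiff[OF edges, of W0 X] BF0 X(2) by (auto simp: D_def F0_def)
    define Z where "Z = (Y' - D) \<union> (D - Y')"
    have "Z \<inter> T = W0 \<inter> T" using Y'(2) S'_def by (auto simp: Z_def D_def)
    then have "separating V T S Z" using W0T W0V Y'(1) X(1) by (auto simp: separating_def Z_def D_def)
    then have m1: "cap c F0 \<le> cap c (cut_edges E Z)" by (rule min0)
    have "cut_edges E Z \<subseteq> cut_edges E Y' \<union> (F0 - B)"
      using cut_symdiff[OF edges, of Y' D] cutD by (auto simp: Z_def)
    then have "cap c (cut_edges E Z) \<le> cap c (cut_edges E Y' \<union> (F0 - B))"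
      using capmono cutE F0_def by (meson Diff_subset Un_least order_trans)
    also have "\<dots> \<le> cap c (cut_edges E Y') + cap c (F0 - B)"
      using capun cutE F0_def by (meson Diff_subset order_trans)
    also have "cap c (F0 - B) = cap c F0 - cap c B" using capdiff BF0 cutE F0_def by blast
    finally have "cap c B \<le> cap c (cut_edges E Y')" using m1 by linarith
    then have "cap c B \<le> cap c (cut_edges E Y)" using Y'(3) by simp
    also have "\<dots> = mincut V E T c S'" using Y by (simp add: min_sep_cut_def)
    finally have "cap c B \<le> mincut V E T c S'" .
    moreover have "mincut V E T c S' \<le> cap c B" using mincut_le[OF finV sepX] X(2) by simp
    ultimately have "min_sep_cut V E T c S' X" using sepX X(2) by (simp add: min_sep_cut_def)
    then have "ES V E T c S' = B" using ES_eq[OF assms(2) prS] X(2) by simp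
    then show ?thesis using prS X(4) by (intro exI[of _ S']) (simp add: Te_def)
  qed
  then obtain g where g: "\<forall>B\<in>BB. g B \<in> Te V E T c \<and> ES V E T c (g B) = B" by metis
  have finBB: "finite BB" using finE BB(1) F0_def cutE
    by (intro finite_subset[of BB "Pow E"]) auto
  obtain xs where xs: "set xs = BB" "distinct xs" using finite_distinct_list[OF finBB] by blast
  have BBne: "BB \<noteq> {}" using BB(1) F0ne by auto
  have ESi: "ES V E T c (map g xs ! i) = xs ! i" if "i < length xs" for i
    using g nth_mem[OF that] xs(1) that by auto
  show ?thesis
  proof (intro exI[of _ "map g xs"] conjI)
    show "map g xs \<noteq> []" using xs BBne by auto
    show "set (map g xs) \<subseteq> Te V E T c" using g xs by auto
    show "\<forall>i<length (map g xs). \<forall>j<length (map g xs). i \<noteq> j \<longrightarrow>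
        ES V E T c (map g xs ! i) \<inter> ES V E T c (map g xs ! j) = {}"
    proof (intro allI impI)
      fix i j assume ij: "i < length (map g xs)" "j < length (map g xs)" "i \<noteq> j"
      then have "xs ! i \<noteq> xs ! j" using xs(2) by (simp add: nth_eq_iff_index_eq)
      moreover have "xs ! i \<in> BB" "xs ! j \<in> BB" using ij xs(1) by (auto simp: nth_mem)
      ultimately show "ES V E T c (map g xs ! i) \<inter> ES V E T c (map g xs ! j) = {}"
        using ESi ij BB(3) by auto
    qed
    have "(\<Union>i < length (map g xs). ES V E T c (map g xs ! i)) = (\<Union>i < length xs. xs ! i)"
      using ESi by simp
    also have "\<dots> = \<Union>(set xs)" by (auto simp: set_conv_nth)
    finally show "ES V E T c S = (\<Union>i < length (map g xs). ES V E T c (map g xs ! i))"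
      using ES0 BB(1) xs(1) by simp
  qed
qed

end
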